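(* Let $k$ be a non-archimedean local field of residue characteristic $2$. Let $B(x)=x_1^2-\Delta x_2^2$ on $k^2$, where $|\Delta|=|\varpi|$. Let $z=q^{-\beta}$, $w=zq^{-1}$, and $t\in\mathfrak o\setminus\{0\}$ with $|t|=q^{-T}$. Then \[ X^B(\beta;t^2)=|2|\,\frac{1+w^{2T+e+1}}{1-w}. \]
   Context: $k$ has ring of integers $\mathfrak o$, uniformizer $\varpi$, residue field of cardinality $q$, absolute value normalized by $|\varpi|=q^{-1}$, and $e=\operatorname{ord}(2)$ is the ramification index. On $\mathfrak o^n$ use the additive Haar measure of total mass $1$. For a quadratic form $B$ on $k^n$, $\rho\in\mathfrak o$ and integer $\ell\ge0$: $X_\ell^B(\rho)=\operatorname{meas}\{x\in\mathfrak o^n: B(x)-\rho\in 2\varpi^\ell\mathfrak o\}$ and $X^B(\beta;\rho)=\sum_{\ell\ge0}z^\ell X_\ell^B(\rho)$ with $z=q^{-\beta}$. *)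

theory Defs
  imports "HOL-Probability.Probability"
begin

definition nonarch_abs :: "('a::field \<Rightarrow> real) \<Rightarrow> bool" where
  "nonarch_abs v \<longleftrightarrow> (\<forall>x. 0 \<le> v x) \<and> (\<forall>x. v x = 0 \<longleftrightarrow> x = 0)
     \<and> (\<forall>x y. v (x * y) = v x * v y) \<and> (\<forall>x y. v (x + y) \<le> max (v x) (v y))"

definition int_ring :: "('a::field \<Rightarrow> real) \<Rightarrow> 'a set" where
  "int_ring v = {x. v x \<le> 1}"

text \<open>Residue field o / p, as the quotient of o by congruence modulo the maximal ideal.\<close>
definition residue_field :: "('a::field \<Rightarrow> real) \<Rightarrow> 'a set set" where
  "residue_field v = int_ring v // {(x, y). x \<in> int_ring v \<and> y \<in> int_ring v \<and> v (x - y) < 1}"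

definition residue_card :: "('a::field \<Rightarrow> real) \<Rightarrow> nat" where
  "residue_card v = card (residue_field v)"

definition nonarch_local_field :: "('a::field \<Rightarrow> real) \<Rightarrow> 'a \<Rightarrow> bool" where
  "nonarch_local_field v \<pi> \<longleftrightarrow> nonarch_abs v
     \<and> 0 < v \<pi> \<and> v \<pi> < 1
     \<and> (\<forall>x. x \<noteq> 0 \<longrightarrow> (\<exists>n::int. v x = v \<pi> powi n))
     \<and> finite (residue_field v)
     \<and> v \<pi> = 1 / real (residue_card v)
     \<and> (\<forall>X::nat \<Rightarrow> 'a. (\<forall>\<epsilon>>0. \<exists>N. \<forall>m\<ge>N. \<forall>n\<ge>N. v (X m - X n) < \<epsilon>)
            \<longrightarrow> (\<exists>L. \<forall>\<epsilon>>0. \<exists>N. \<forall>n\<ge>N. v (X n - L) < \<epsilon>))"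

definition box2 :: "('a::field \<Rightarrow> real) \<Rightarrow> 'a \<times> 'a \<Rightarrow> real \<Rightarrow> ('a \<times> 'a) set" where
  "box2 v c r = {x. v (fst x - fst c) \<le> r \<and> v (snd x - snd c) \<le> r}"

definition transl2 :: "'a::field \<times> 'a \<Rightarrow> 'a \<times> 'a \<Rightarrow> 'a \<times> 'a" where
  "transl2 a x = (fst x + fst a, snd x + snd a)"

definition haar_o2 :: "('a::field \<Rightarrow> real) \<Rightarrow> 'a \<Rightarrow> ('a \<times> 'a) measure \<Rightarrow> bool" where
  "haar_o2 v \<pi> \<mu> \<longleftrightarrow> prob_space \<mu> \<and> space \<mu> = int_ring v \<times> int_ring v
     \<and> (\<forall>c \<in> int_ring v \<times> int_ring v. \<forall>m::nat. box2 v c (v \<pi> ^ m) \<in> sets \<mu>)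
     \<and> (\<forall>A \<in> sets \<mu>. \<forall>a \<in> int_ring v \<times> int_ring v.
          transl2 a ` A \<in> sets \<mu> \<and> measure \<mu> (transl2 a ` A) = measure \<mu> A)"

definition X_l :: "('a::field \<Rightarrow> real) \<Rightarrow> 'a \<Rightarrow> ('a \<times> 'a) measure \<Rightarrow> ('a \<times> 'a \<Rightarrow> 'a)
    \<Rightarrow> 'a \<Rightarrow> nat \<Rightarrow> real" where
  "X_l v \<pi> \<mu> B \<rho> l = measure \<mu> {x \<in> int_ring v \<times> int_ring v.
       \<exists>y \<in> int_ring v. B x - \<rho> = 2 * \<pi> ^ l * y}"

definition X_gen :: "('a::field \<Rightarrow> real) \<Rightarrow> 'a \<Rightarrow> ('a \<times> 'a) measure \<Rightarrow> ('a \<times> 'a \<Rightarrow> 'a)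
    \<Rightarrow> complex \<Rightarrow> 'a \<Rightarrow> complex" where
  "X_gen v \<pi> \<mu> B \<beta> \<rho> =
     (\<Sum>l. (of_real (real (residue_card v)) powr (- \<beta>)) ^ l * of_real (X_l v \<pi> \<mu> B \<rho> l))"

end

theory Submission
  imports Defs
begin

locale LF =
  fixes v :: "'a::field \<Rightarrow> real" and \<pi> :: 'a
  assumes lf: "nonarch_local_field v \<pi>"
begin

abbreviation "p \<equiv> v \<pi>"
abbreviation "Oi \<equiv> int_ring v"

lemma v_nonneg: "0 \<le> v x" using lf unfolding nonarch_local_field_def nonarch_abs_def by auto
lemma v_zero_iff: "v x = 0 \<longleftrightarrow> x = 0" using lf unfolding nonarch_local_field_def nonarch_abs_def by auto
lemma v_mult: "v (x * y) = v x * v y" using lf unfolding nonarch_local_field_def nonarch_abs_def by auto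
lemma v_ultra: "v (x + y) \<le> max (v x) (v y)" using lf unfolding nonarch_local_field_def nonarch_abs_def by auto
lemma p_pos: "0 < p" using lf unfolding nonarch_local_field_def by auto
lemma p_lt1: "p < 1" using lf unfolding nonarch_local_field_def by auto
lemma v_discr: "x \<noteq> 0 \<Longrightarrow> \<exists>n::int. v x = p powi n" using lf unfolding nonarch_local_field_def by auto
lemma fin_res: "finite (residue_field v)" using lf unfolding nonarch_local_field_def by auto
lemma p_q: "p = 1 / real (residue_card v)" using lf unfolding nonarch_local_field_def by auto

lemma v0[simp]: "v 0 = 0" using v_zero_iff by auto
lemma v1[simp]: "v 1 = 1"
proof -
  have "v 1 = v 1 * v 1" using v_mult[of 1 1] by simp
  moreover have "v 1 \<noteq> 0" using v_zero_iff by auto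
  ultimately show ?thesis by (metis mult_cancel_left1)
qed
lemma vm1: "v (-1) = 1"
proof -
  have h: "v (-1) * v (-1) = 1" using v_mult[of "-1" "-1"] by simp
  have n: "0 \<le> v (-1)" by (rule v_nonneg)
  show ?thesis
  proof (rule ccontr)
    assume "v (-1) \<noteq> 1"
    hence "v (-1) < 1 \<or> v (-1) > 1" by linarith
    thus False
    proof
      assume a: "v (-1) < 1"
      have "v (-1) * v (-1) \<le> v (-1) * 1" by (rule mult_left_mono) (use a n in auto)
      hence "v (-1) * v (-1) < 1" using a by linarith
      thus False using h by simp
    next
      assume a: "v (-1) > 1"
      have "v (-1) * 1 \<le> v (-1) * v (-1)" by (rule mult_left_mono) (use a n in auto)
      hence "v (-1) * v (-1) > 1" using a by linarith
      thus False using h by simp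
    qed
  qed
qed
lemma v_neg[simp]: "v (- x) = v x"
  using v_mult[of "-1" x] vm1 by simp
lemma v_diff: "v (x - y) \<le> max (v x) (v y)"
  using v_ultra[of x "-y"] by simp
lemma v_sym: "v (x - y) = v (y - x)"
  by (metis minus_diff_eq v_neg)
lemma v_pow: "v (x ^ n) = v x ^ n"
  by (induction n) (auto simp: v_mult)
lemma v_div: "v (x / y) = v x / v y"
proof (cases "y = 0")
  case True thus ?thesis by simp
next
  case False
  hence "v x = v (x / y) * v y" using v_mult[of "x/y" y] by simp
  moreover have "v y \<noteq> 0" using False v_zero_iff by auto
  ultimately show ?thesis by simp
qed
lemma v_add_eq: assumes "v x \<noteq> v y" shows "v (x + y) = max (v x) (v y)"
proof -
  have a: "v (x + y) \<le> max (v x) (v y)" by (rule v_ultra)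
  have b: "v x \<le> max (v (x + y)) (v y)" using v_diff[of "x+y" y] by simp
  have c: "v y \<le> max (v (x + y)) (v x)" using v_diff[of "x+y" x] by simp
  show ?thesis using a b c assms by linarith
qed
lemma v_diff_eq: assumes "v x \<noteq> v y" shows "v (x - y) = max (v x) (v y)"
  using v_add_eq[of x "-y"] assms by simp

lemma v_le: "v a \<le> c \<Longrightarrow> v b \<le> c \<Longrightarrow> v (a + b) \<le> c"
  using v_ultra[of a b] by linarith
lemma v_le_diff: "v a \<le> c \<Longrightarrow> v b \<le> c \<Longrightarrow> v (a - b) \<le> c"
  using v_diff[of a b] by linarith

lemma p_pow_pos: "0 < p ^ n" using p_pos by simp
lemma p_pow_le1: "p ^ n \<le> 1" using p_pos p_lt1 by (simp add: power_le_one)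
lemma pp_le[simp]: "p ^ m \<le> p ^ n \<longleftrightarrow> n \<le> m" using p_pos p_lt1 by simp
lemma pp_lt[simp]: "p ^ m < p ^ n \<longleftrightarrow> n < m" using p_pos p_lt1 by simp
lemma pp_eq[simp]: "p ^ m = p ^ n \<longleftrightarrow> n = m" using pp_le by (metis order.eq_iff)

lemma v_nat: assumes "x \<noteq> 0" "v x \<le> 1" shows "\<exists>k::nat. v x = p ^ k"
proof -
  obtain n :: int where n: "v x = p powi n" using v_discr assms by auto
  show ?thesis
  proof (cases "n \<ge> 0")
    case True thus ?thesis using n by (metis power_int_of_nat nonneg_int_cases)
  next
    case False
    hence "p powi n = inverse (p ^ nat (-n))"
      by (metis (no_types, opaque_lifting) minus_minus nat_0_le neg_0_le_iff_le nle_le power_int_minus power_int_of_nat)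
    moreover have "p ^ nat (-n) < 1" using False p_pos p_lt1 by (simp add: power_less_one_iff)
    ultimately have "v x > 1" using n p_pos by (simp add: one_less_inverse)
    thus ?thesis using assms by simp
  qed
qed

lemma v_lt1: assumes "v x < 1" shows "v x \<le> p"
proof (cases "x = 0")
  case True thus ?thesis using p_pos by simp
next
  case False
  then obtain k where k: "v x = p ^ k" using v_nat assms by force
  hence "k \<noteq> 0" using assms by (cases k) auto
  hence "p ^ k \<le> p ^ 1" using pp_le by (metis One_nat_def Suc_leI not_gr0)
  thus ?thesis using k by simp
qed

definition "rel = {(x, y). x \<in> Oi \<and> y \<in> Oi \<and> v (x - y) < 1}"

lemma rel_equiv: "equiv Oi rel"
proof (rule equivI)
  show "rel \<subseteq> Oi \<times> Oi" unfolding rel_def by auto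
  show "refl_on Oi rel" unfolding rel_def refl_on_def by auto
  show "sym rel" unfolding rel_def sym_def using v_sym by auto
  show "trans rel" unfolding rel_def trans_def
  proof (clarsimp)
    fix x y z assume "v (x - y) < 1" "v (y - z) < 1"
    moreover have "v (x - z) \<le> max (v (x - y)) (v (y - z))" using v_ultra[of "x - y" "y - z"] by simp
    ultimately show "v (x - z) < 1" by linarith
  qed
qed

lemma res_field_eq: "residue_field v = Oi // rel"
  unfolding residue_field_def rel_def by simp

lemma R1_ex: "\<exists>R. finite R \<and> card R = residue_card v \<and> R \<subseteq> Oi \<and> (\<forall>y\<in>Oi. \<exists>r\<in>R. v (y - r) < 1)
   \<and> (\<forall>r\<in>R. \<forall>r'\<in>R. v (r - r') < 1 \<longrightarrow> r = r')"
proof -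
  define F where "F = residue_field v"
  define rep where "rep = (\<lambda>C::'a set. SOME x. x \<in> C)"
  have eq: "equiv Oi rel" by (rule rel_equiv)
  have repC: "rep C \<in> C" "C = rel``{rep C}" "rep C \<in> Oi" if "C \<in> F" for C
  proof -
    have CF: "C \<in> Oi // rel" using that unfolding F_def res_field_eq .
    obtain x where x: "C = rel``{x}" "x \<in> Oi" using CF by (rule quotientE) auto
    have "x \<in> C" using x equiv_class_self[OF eq] by auto
    thus r: "rep C \<in> C" unfolding rep_def by (metis someI)
    hence xr: "(x, rep C) \<in> rel" using x by simp
    show "C = rel``{rep C}" using x(1) equiv_class_eq[OF eq xr] by simp
    show "rep C \<in> Oi" using xr by (simp add: rel_def)
  qed
  have inj: "inj_on rep F"
  proof (rule inj_onI)
    fix C D assume CD: "C \<in> F" "D \<in> F" "rep C = rep D"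
    have "C = rel``{rep C}" "D = rel``{rep D}" using repC(2)[OF CD(1)] repC(2)[OF CD(2)] by auto
    thus "C = D" using CD(3) by simp
  qed
  define R where "R = rep ` F"
  have fin: "finite F" unfolding F_def by (rule fin_res)
  show ?thesis
  proof (intro exI[of _ R] conjI)
    show "finite R" unfolding R_def using fin by simp
    show "card R = residue_card v" unfolding R_def residue_card_def F_def[symmetric] using card_image[OF inj] by simp
    show "R \<subseteq> Oi" unfolding R_def using repC by auto
    show "\<forall>y\<in>Oi. \<exists>r\<in>R. v (y - r) < 1"
    proof
      fix y assume y: "y \<in> Oi"
      have C: "rel``{y} \<in> F" unfolding F_def res_field_eq using y by (rule quotientI)
      have "rep (rel``{y}) \<in> rel``{y}" using repC(1)[OF C] .
      hence "v (y - rep (rel``{y})) < 1" unfolding rel_def by auto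
      thus "\<exists>r\<in>R. v (y - r) < 1" unfolding R_def using C by blast
    qed
    show "\<forall>r\<in>R. \<forall>r'\<in>R. v (r - r') < 1 \<longrightarrow> r = r'"
    proof (intro ballI impI)
      fix r r' assume "r \<in> R" "r' \<in> R" and lt: "v (r - r') < 1"
      then obtain C D where CD: "C \<in> F" "D \<in> F" "r = rep C" "r' = rep D" unfolding R_def by auto
      have "r \<in> Oi" "r' \<in> Oi" using repC(3) CD by auto
      hence "(r, r') \<in> rel" unfolding rel_def using lt by simp
      hence "rel``{r} = rel``{r'}" using equiv_class_eq[OF eq] by blast
      moreover have "C = rel``{rep C}" "D = rel``{rep D}" using repC(2)[OF CD(1)] repC(2)[OF CD(2)] by auto
      ultimately have "C = D" using CD by simp
      thus "r = r'" using CD by simp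
    qed
  qed
qed

definition "R1 = (SOME R. finite R \<and> card R = residue_card v \<and> R \<subseteq> Oi \<and> (\<forall>y\<in>Oi. \<exists>r\<in>R. v (y - r) < 1)
   \<and> (\<forall>r\<in>R. \<forall>r'\<in>R. v (r - r') < 1 \<longrightarrow> r = r'))"

lemma R1_all: "finite R1 \<and> card R1 = residue_card v \<and> R1 \<subseteq> Oi \<and> (\<forall>y\<in>Oi. \<exists>r\<in>R1. v (y - r) < 1)
   \<and> (\<forall>r\<in>R1. \<forall>r'\<in>R1. v (r - r') < 1 \<longrightarrow> r = r')"
  unfolding R1_def by (rule someI_ex[OF R1_ex])

lemma R1: "finite R1" "card R1 = residue_card v" "R1 \<subseteq> Oi" "\<And>y. y \<in> Oi \<Longrightarrow> \<exists>r\<in>R1. v (y - r) < 1"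
   "\<And>r r'. r \<in> R1 \<Longrightarrow> r' \<in> R1 \<Longrightarrow> v (r - r') < 1 \<Longrightarrow> r = r'"
  using R1_all by auto

lemma q_eq: "real (residue_card v) = 1 / p"
proof -
  have "real (residue_card v) \<noteq> 0" using p_q p_pos by auto
  thus ?thesis using p_q by simp
qed

lemma q_gt1: "real (residue_card v) > 1"
  unfolding q_eq using p_pos p_lt1 by (simp add: less_divide_eq_1_pos)

lemma pq: "real (residue_card v) * p = 1" using p_q q_gt1 by simp

definition "ball1 a n = {y. v (y - a) \<le> p ^ n}"

lemma oi_iff: "x \<in> Oi \<longleftrightarrow> v x \<le> 1" unfolding int_ring_def by simp

lemma ball1_sub: "a \<in> Oi \<Longrightarrow> ball1 a n \<subseteq> Oi"
proof
  fix y assume "a \<in> Oi" "y \<in> ball1 a n"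
  hence "v a \<le> 1" "v (y - a) \<le> 1" using p_pow_le1[of n] unfolding ball1_def oi_iff by auto
  hence "v ((y - a) + a) \<le> 1" by (intro v_le) auto
  thus "y \<in> Oi" unfolding oi_iff by simp
qed

lemma ball1_decomp: assumes "a \<in> Oi"
  shows "ball1 a n = (\<Union>r\<in>R1. ball1 (a + \<pi> ^ n * r) (Suc n))"
    and "disjoint_family_on (\<lambda>r. ball1 (a + \<pi> ^ n * r) (Suc n)) R1"
    and "\<And>r. r \<in> R1 \<Longrightarrow> a + \<pi> ^ n * r \<in> Oi"
proof -
  have pn0: "\<pi> ^ n \<noteq> 0" using p_pos v_zero_iff by (metis less_irrefl power_not_zero)
  have vpn: "v (\<pi> ^ n) = p ^ n" by (simp add: v_pow)
  show "\<And>r. r \<in> R1 \<Longrightarrow> a + \<pi> ^ n * r \<in> Oi"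
  proof -
    fix r assume "r \<in> R1"
    hence "v r \<le> 1" using R1(3) oi_iff by auto
    hence "v (\<pi> ^ n * r) \<le> 1" using vpn p_pow_le1[of n] v_nonneg[of r] by (simp add: v_mult mult_le_one)
    thus "a + \<pi> ^ n * r \<in> Oi" using assms unfolding oi_iff by (intro v_le) auto
  qed
  show "ball1 a n = (\<Union>r\<in>R1. ball1 (a + \<pi> ^ n * r) (Suc n))"
  proof (intro equalityI subsetI)
    fix y assume y: "y \<in> ball1 a n"
    define w where "w = (y - a) / \<pi> ^ n"
    have "v w = v (y - a) / p ^ n" unfolding w_def by (simp add: v_div v_pow)
    hence "v w \<le> 1" using y p_pow_pos[of n] unfolding ball1_def by simp
    then obtain r where r: "r \<in> R1" "v (w - r) < 1" using R1(4) oi_iff by blast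
    have "y - (a + \<pi> ^ n * r) = \<pi> ^ n * (w - r)" unfolding w_def using pn0 by (simp add: field_simps)
    hence "v (y - (a + \<pi> ^ n * r)) = p ^ n * v (w - r)" by (simp add: v_mult vpn)
    also have "\<dots> \<le> p ^ n * p" using v_lt1[OF r(2)] p_pow_pos[of n] by simp
    finally show "y \<in> (\<Union>r\<in>R1. ball1 (a + \<pi> ^ n * r) (Suc n))" unfolding ball1_def using r by (auto simp: mult.commute)
  next
    fix y assume "y \<in> (\<Union>r\<in>R1. ball1 (a + \<pi> ^ n * r) (Suc n))"
    then obtain r where r: "r \<in> R1" "v (y - (a + \<pi> ^ n * r)) \<le> p ^ Suc n" unfolding ball1_def by auto
    have "v r \<le> 1" using r R1(3) oi_iff by auto
    hence a: "v (\<pi> ^ n * r) \<le> p ^ n" using vpn p_pow_pos[of n] v_nonneg[of r] by (simp add: v_mult mult_left_le)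
    have "p ^ Suc n \<le> p ^ n" using pp_le[of "Suc n" n] by (simp del: pp_le)
    hence "v ((y - (a + \<pi> ^ n * r)) + \<pi> ^ n * r) \<le> p ^ n" using r(2) a by (intro v_le) auto
    thus "y \<in> ball1 a n" unfolding ball1_def by simp
  qed
  show "disjoint_family_on (\<lambda>r. ball1 (a + \<pi> ^ n * r) (Suc n)) R1"
  proof (unfold disjoint_family_on_def, intro ballI impI)
    fix r r' assume r: "r \<in> R1" "r' \<in> R1" "r \<noteq> r'"
    show "ball1 (a + \<pi> ^ n * r) (Suc n) \<inter> ball1 (a + \<pi> ^ n * r') (Suc n) = {}"
    proof (rule ccontr)
      assume "ball1 (a + \<pi> ^ n * r) (Suc n) \<inter> ball1 (a + \<pi> ^ n * r') (Suc n) \<noteq> {}"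
      then obtain y where y: "v (y - (a + \<pi> ^ n * r)) \<le> p ^ Suc n" "v (y - (a + \<pi> ^ n * r')) \<le> p ^ Suc n"
        unfolding ball1_def by auto
      have "v ((y - (a + \<pi> ^ n * r')) - (y - (a + \<pi> ^ n * r))) \<le> p ^ Suc n" using v_le_diff[OF y(2) y(1)] .
      moreover have "(y - (a + \<pi> ^ n * r')) - (y - (a + \<pi> ^ n * r)) = \<pi> ^ n * (r - r')" by (simp add: algebra_simps)
      ultimately have "p ^ n * v (r - r') \<le> p ^ n * p" by (simp add: v_mult vpn mult.commute)
      hence "v (r - r') \<le> p" using p_pow_pos[of n] by simp
      hence "r = r'" using R1(5)[OF r(1,2)] p_lt1 by linarith
      thus False using r by simp
    qed
  qed
qed

lemma disj_ball: assumes "a \<in> Oi" "r \<in> R1" "r' \<in> R1" "y \<in> ball1 (a + \<pi> ^ n * r) (Suc n)" "y \<in> ball1 (a + \<pi> ^ n * r') (Suc n)"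
  shows "r = r'"
  using ball1_decomp(2)[OF assms(1), of n] assms(2-5) unfolding disjoint_family_on_def by blast

end

locale LFH = LF +
  fixes \<mu> :: "('a \<times> 'a) measure"
  assumes haar: "haar_o2 v \<pi> \<mu>"
begin

lemma ps: "prob_space \<mu>" using haar unfolding haar_o2_def by auto
lemma sp: "space \<mu> = Oi \<times> Oi" using haar unfolding haar_o2_def by auto
lemma box_sets: "c \<in> Oi \<times> Oi \<Longrightarrow> box2 v c (p ^ m) \<in> sets \<mu>" using haar unfolding haar_o2_def by auto
lemma transl_inv: "A \<in> sets \<mu> \<Longrightarrow> a \<in> Oi \<times> Oi \<Longrightarrow> transl2 a ` A \<in> sets \<mu> \<and> measure \<mu> (transl2 a ` A) = measure \<mu> A"
  using haar unfolding haar_o2_def by auto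

definition "cyl a n b k = ball1 a n \<times> ball1 b k"

lemma box_cyl: "box2 v (a, b) (p ^ m) = cyl a m b m"
  unfolding box2_def cyl_def ball1_def by auto

lemma U: assumes "finite I" "\<And>i. i \<in> I \<Longrightarrow> A i \<in> sets \<mu>" "\<And>i. i \<in> I \<Longrightarrow> measure \<mu> (A i) = c"
   "disjoint_family_on A I"
  shows "(\<Union>i\<in>I. A i) \<in> sets \<mu>" "measure \<mu> (\<Union>i\<in>I. A i) = real (card I) * c"
proof -
  interpret prob_space \<mu> by (rule ps)
  show "(\<Union>i\<in>I. A i) \<in> sets \<mu>" using assms by auto
  have "measure \<mu> (\<Union>i\<in>I. A i) = (\<Sum>i\<in>I. measure \<mu> (A i))"
    by (rule finite_measure_finite_Union) (use assms in auto)
  also have "\<dots> = real (card I) * c" using assms(3) by simp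
  finally show "measure \<mu> (\<Union>i\<in>I. A i) = real (card I) * c" .
qed

lemma transl_cyl: "transl2 (a, b) ` cyl 0 m 0 k = cyl a m b k"
proof (intro equalityI subsetI)
  fix x assume "x \<in> transl2 (a, b) ` cyl 0 m 0 k"
  thus "x \<in> cyl a m b k" unfolding transl2_def cyl_def ball1_def by auto
next
  fix x assume x: "x \<in> cyl a m b k"
  have "x = transl2 (a, b) (fst x - a, snd x - b)" unfolding transl2_def by simp
  moreover have "(fst x - a, snd x - b) \<in> cyl 0 m 0 k" using x unfolding cyl_def ball1_def by auto
  ultimately show "x \<in> transl2 (a, b) ` cyl 0 m 0 k" by blast
qed

lemma zero_oi: "0 \<in> Oi" unfolding oi_iff by simp

lemma cyl00: "cyl 0 0 0 0 = Oi \<times> Oi" unfolding cyl_def ball1_def int_ring_def by auto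

lemma box_meas: "a \<in> Oi \<Longrightarrow> b \<in> Oi \<Longrightarrow> cyl a m b m \<in> sets \<mu> \<and> measure \<mu> (cyl a m b m) = p ^ (2 * m)"
proof -
  have S: "cyl a m b m \<in> sets \<mu>" if "a \<in> Oi" "b \<in> Oi" for a b m
    using box_sets[of "(a, b)" m] that by (simp add: box_cyl)
  have T: "measure \<mu> (cyl a m b m) = measure \<mu> (cyl 0 m 0 m)" if "a \<in> Oi" "b \<in> Oi" for a b m
    using transl_inv[OF S[OF zero_oi zero_oi], of "(a, b)" m] that by (simp add: transl_cyl)
  have F: "measure \<mu> (cyl 0 m 0 m) = p ^ (2 * m)" for m
  proof (induction m)
    case 0
    interpret prob_space \<mu> by (rule ps)
    show ?case using prob_space sp cyl00 by simp
  next
    case (Suc m)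
    define A where "A = (\<lambda>rs. cyl (0 + \<pi> ^ m * fst rs) (Suc m) (0 + \<pi> ^ m * snd rs) (Suc m))"
    have dec: "cyl 0 m 0 m = (\<Union>rs\<in>R1 \<times> R1. A rs)"
      unfolding A_def cyl_def ball1_decomp(1)[OF zero_oi, of m] by auto
    have disj: "disjoint_family_on A (R1 \<times> R1)"
    proof (unfold disjoint_family_on_def, intro ballI impI)
      fix rs rs' assume a: "rs \<in> R1 \<times> R1" "rs' \<in> R1 \<times> R1" "rs \<noteq> rs'"
      show "A rs \<inter> A rs' = {}"
      proof (rule ccontr)
        assume "A rs \<inter> A rs' \<noteq> {}"
        then obtain x where "x \<in> A rs" "x \<in> A rs'" by auto
        hence "fst rs = fst rs'" "snd rs = snd rs'" using a unfolding A_def cyl_def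
          by (auto intro: disj_ball[OF zero_oi])
        thus False using a by (simp add: prod_eq_iff)
      qed
    qed
    have cen: "0 + \<pi> ^ m * r \<in> Oi" if "r \<in> R1" for r using ball1_decomp(3)[OF zero_oi that] .
    have U1: "(\<Union>rs\<in>R1 \<times> R1. A rs) \<in> sets \<mu> \<and> measure \<mu> (\<Union>rs\<in>R1 \<times> R1. A rs) = real (card (R1 \<times> R1)) * measure \<mu> (cyl 0 (Suc m) 0 (Suc m))"
    proof -
      have "A rs \<in> sets \<mu>" "measure \<mu> (A rs) = measure \<mu> (cyl 0 (Suc m) 0 (Suc m))" if "rs \<in> R1 \<times> R1" for rs
        using S[OF cen cen] T[OF cen cen] that unfolding A_def by (auto simp: mem_Times_iff)
      thus ?thesis using U[of "R1 \<times> R1" A "measure \<mu> (cyl 0 (Suc m) 0 (Suc m))"] disj R1(1) by simp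
    qed
    have "p ^ (2 * m) = real (card (R1 \<times> R1)) * measure \<mu> (cyl 0 (Suc m) 0 (Suc m))"
      using Suc U1 dec by simp
    hence "p ^ (2 * m) = (real (residue_card v) * p) ^ 2 / p ^ 2 * measure \<mu> (cyl 0 (Suc m) 0 (Suc m))"
      using R1(1,2) p_pos by (simp add: card_cartesian_product power2_eq_square)
    hence "p ^ (2 * m) = measure \<mu> (cyl 0 (Suc m) 0 (Suc m)) / p ^ 2" by (simp add: pq)
    thus ?case using p_pos by (simp add: field_simps power_add power2_eq_square)
  qed
  assume "a \<in> Oi" "b \<in> Oi"
  thus ?thesis using S T F by simp
qed

end

context LF begin

end

context LFH begin

definition "Pc n k \<longleftrightarrow> (\<forall>a b. a \<in> Oi \<longrightarrow> b \<in> Oi \<longrightarrow> cyl a n b k \<in> sets \<mu> \<and> measure \<mu> (cyl a n b k) = p ^ (n + k))"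

lemma PA: assumes "Pc (Suc n) k" shows "Pc n k"
  unfolding Pc_def
proof (intro allI impI)
  fix a b assume ab: "a \<in> Oi" "b \<in> Oi"
  define A where "A = (\<lambda>r. cyl (a + \<pi> ^ n * r) (Suc n) b k)"
  have dec: "cyl a n b k = (\<Union>r\<in>R1. A r)"
    unfolding A_def cyl_def ball1_decomp(1)[OF ab(1), of n] by auto
  have disj: "disjoint_family_on A R1"
    unfolding disjoint_family_on_def A_def cyl_def using disj_ball[OF ab(1)] by blast
  have "A r \<in> sets \<mu> \<and> measure \<mu> (A r) = p ^ (Suc n + k)" if "r \<in> R1" for r
    using assms ball1_decomp(3)[OF ab(1) that] ab(2) unfolding Pc_def A_def by blast
  hence "(\<Union>r\<in>R1. A r) \<in> sets \<mu> \<and> measure \<mu> (\<Union>r\<in>R1. A r) = real (card R1) * p ^ (Suc n + k)"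
    using U[of R1 A] R1(1) disj by auto
  moreover have "real (card R1) * p ^ (Suc n + k) = p ^ (n + k)" using R1(2) pq
    by (simp add: mult.assoc[symmetric])
  ultimately show "cyl a n b k \<in> sets \<mu> \<and> measure \<mu> (cyl a n b k) = p ^ (n + k)" using dec by simp
qed

lemma PB: assumes "Pc n (Suc k)" shows "Pc n k"
  unfolding Pc_def
proof (intro allI impI)
  fix a b assume ab: "a \<in> Oi" "b \<in> Oi"
  define A where "A = (\<lambda>r. cyl a n (b + \<pi> ^ k * r) (Suc k))"
  have dec: "cyl a n b k = (\<Union>r\<in>R1. A r)"
    unfolding A_def cyl_def ball1_decomp(1)[OF ab(2), of k] by auto
  have disj: "disjoint_family_on A R1"
    unfolding disjoint_family_on_def A_def cyl_def using disj_ball[OF ab(2)] by blast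
  have "A r \<in> sets \<mu> \<and> measure \<mu> (A r) = p ^ (n + Suc k)" if "r \<in> R1" for r
    using assms ball1_decomp(3)[OF ab(2) that] ab(1) unfolding Pc_def A_def by blast
  hence "(\<Union>r\<in>R1. A r) \<in> sets \<mu> \<and> measure \<mu> (\<Union>r\<in>R1. A r) = real (card R1) * p ^ (n + Suc k)"
    using U[of R1 A] R1(1) disj by auto
  moreover have "real (card R1) * p ^ (n + Suc k) = p ^ (n + k)" using R1(2) pq
    by (simp add: mult.assoc[symmetric])
  ultimately show "cyl a n b k \<in> sets \<mu> \<and> measure \<mu> (cyl a n b k) = p ^ (n + k)" using dec by simp
qed

lemma PA': "Pc (n + d) k \<Longrightarrow> Pc n k"
  by (induction d) (auto intro: PA)
lemma PB': "Pc n (k + d) \<Longrightarrow> Pc n k"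
  by (induction d) (auto intro: PB)

lemma Pc_all: "Pc n k"
proof -
  define M where "M = max n k"
  have "Pc M M" unfolding Pc_def using box_meas by (simp add: mult_2)
  hence "Pc n M" using PA'[of n "M - n" M] unfolding M_def by simp
  thus "Pc n k" using PB'[of n k "M - k"] unfolding M_def by simp
qed

lemma cyl_meas: "a \<in> Oi \<Longrightarrow> b \<in> Oi \<Longrightarrow> cyl a n b k \<in> sets \<mu>"
   "a \<in> Oi \<Longrightarrow> b \<in> Oi \<Longrightarrow> measure \<mu> (cyl a n b k) = p ^ (n + k)"
  using Pc_all unfolding Pc_def by auto

end


context LF begin

lemma vprod_le: "v x \<le> p ^ a \<Longrightarrow> v y \<le> p ^ b \<Longrightarrow> v (x * y) \<le> p ^ (a + b)"
  by (simp add: v_mult power_add mult_mono v_nonneg p_pow_pos less_imp_le)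

lemma vsq_le: "v x \<le> p ^ a \<Longrightarrow> v (x ^ 2) \<le> p ^ (2 * a)"
  using vprod_le[of x a x a] by (simp add: power2_eq_square mult_2)

lemma pow_sq: "(p ^ a) ^ 2 = p ^ (2 * a)" by (simp add: power_mult mult.commute)

lemma sq_le: assumes "x \<in> Oi" shows "v x ^ 2 \<le> p ^ m \<longleftrightarrow> v x \<le> p ^ ((m + 1) div 2)"
proof (cases "x = 0")
  case True thus ?thesis using p_pow_pos[of m] p_pow_pos[of "(m+1) div 2"] by simp
next
  case False
  then obtain a where a: "v x = p ^ a" using v_nat assms oi_iff by blast
  have "p ^ (2 * a) \<le> p ^ m \<longleftrightarrow> p ^ a \<le> p ^ ((m + 1) div 2)" by simp presburger
  thus ?thesis using a pow_sq by simp
qed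

lemma psq_le: assumes "x \<in> Oi" shows "p * v x ^ 2 \<le> p ^ m \<longleftrightarrow> v x \<le> p ^ (m div 2)"
proof (cases "x = 0")
  case True thus ?thesis using p_pow_pos[of m] p_pow_pos[of "m div 2"] by simp
next
  case False
  then obtain a where a: "v x = p ^ a" using v_nat assms oi_iff by blast
  have e1: "p ^ Suc (2 * a) \<le> p ^ m \<longleftrightarrow> m \<le> Suc (2 * a)" by (rule pp_le)
  have e2: "m \<le> Suc (2 * a) \<longleftrightarrow> m div 2 \<le> a" by presburger
  have h: "p * v x ^ 2 = p ^ Suc (2 * a)" using a pow_sq[of a] by simp
  have e3: "v x \<le> p ^ (m div 2) \<longleftrightarrow> m div 2 \<le> a" using a by simp
  show ?thesis by (simp only: h e1 e2 e3)
qed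

lemma NS: assumes "z \<in> Oi" "odd r" "r < 2 * e" "v (2 * z + z ^ 2) = p ^ r" and v2: "v 2 = p ^ e"
  shows False
proof (cases "z = 0")
  case True
  hence "v (2 * z + z ^ 2) = 0" by simp
  thus ?thesis using assms(4) p_pow_pos[of r] by linarith
next
  case False
  then obtain k where k: "v z = p ^ k" using v_nat assms(1) oi_iff by blast
  have a: "v (2 * z) = p ^ (e + k)" using k v2 by (simp add: v_mult power_add)
  have b: "v (z ^ 2) = p ^ (2 * k)" using k by (simp add: v_pow pow_sq)
  show False
  proof (cases "k < e")
    case True
    hence "v (2 * z) \<noteq> v (z ^ 2)" using a b by simp
    hence "v (2 * z + z ^ 2) = max (p ^ (e + k)) (p ^ (2 * k))" using v_add_eq a b by simp
    also have "\<dots> = p ^ (2 * k)" using True by (simp add: max_def)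
    finally have "2 * k = r" using assms(4) by simp
    thus False using assms(2) by auto
  next
    case False
    have "p ^ (e + k) \<le> p ^ (2 * e)" "p ^ (2 * k) \<le> p ^ (2 * e)" using False by simp_all
    hence "v (2 * z + z ^ 2) \<le> p ^ (2 * e)" using a b by (intro v_le) auto
    moreover have "p ^ (2 * e) < p ^ r" using assms(3) by simp
    ultimately show False using assms(4) by simp
  qed
qed

lemma SQ1: assumes "z \<in> Oi" "j \<le> 2 * e" "v (2 * z + z ^ 2) \<le> p ^ j" and v2: "v 2 = p ^ e"
  shows "v z \<le> p ^ ((j + 1) div 2)"
proof (cases "z = 0")
  case True thus ?thesis using p_pow_pos[of "(j+1) div 2"] by simp
next
  case False
  then obtain k where k: "v z = p ^ k" using v_nat assms(1) oi_iff by blast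
  have a: "v (2 * z) = p ^ (e + k)" using k v2 by (simp add: v_mult power_add)
  have b: "v (z ^ 2) = p ^ (2 * k)" using k by (simp add: v_pow pow_sq)
  show ?thesis
  proof (cases "k < e")
    case True
    hence "v (2 * z) \<noteq> v (z ^ 2)" using a b by simp
    hence "v (2 * z + z ^ 2) = max (p ^ (e + k)) (p ^ (2 * k))" using v_add_eq a b by simp
    also have "\<dots> = p ^ (2 * k)" using True by (simp add: max_def)
    finally have "j \<le> 2 * k" using assms(3) by simp
    hence "(j + 1) div 2 \<le> k" by presburger
    thus ?thesis using k by simp
  next
    case False
    hence "(j + 1) div 2 \<le> k" using assms(2) by presburger
    thus ?thesis using k by simp
  qed
qed

end


locale LFP = LFH +
  fixes \<Delta> t :: 'a and e T :: nat
  assumes v2: "v 2 = p ^ e" and vD: "v \<Delta> = p" and vt: "v t = p ^ T" and t0: "t \<noteq> 0"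
begin

lemma t_oi: "t \<in> Oi" using vt p_pow_le1 oi_iff by simp

lemma vD2: "v (\<Delta> * y ^ 2) = p * v y ^ 2" by (simp add: v_mult v_pow vD)

lemma vN: assumes "x1 \<in> Oi" "x2 \<in> Oi"
  shows "v (x1 ^ 2 - \<Delta> * x2 ^ 2) = max (v x1 ^ 2) (p * v x2 ^ 2)"
proof (cases "v (x1 ^ 2) = v (\<Delta> * x2 ^ 2)")
  case False thus ?thesis using v_diff_eq[OF False] by (simp add: vD2 v_pow)
next
  case True
  hence eq: "v x1 ^ 2 = p * v x2 ^ 2" by (simp add: vD2 v_pow)
  have "x1 = 0 \<and> x2 = 0"
  proof (cases "x1 = 0 \<or> x2 = 0")
    case True
    show ?thesis
    proof (cases "x1 = 0")
      case True
      hence "p * v x2 ^ 2 = 0" using eq by simp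
      hence "v x2 = 0" using p_pos by simp
      thus ?thesis using True v_zero_iff by blast
    next
      case False
      hence x2: "x2 = 0" using \<open>x1 = 0 \<or> x2 = 0\<close> by blast
      hence "v x1 ^ 2 = 0" using eq by simp
      hence "v x1 = 0" by simp
      thus ?thesis using x2 v_zero_iff by blast
    qed
  next
    case False
    then obtain a b where a: "v x1 = p ^ a" and b: "v x2 = p ^ b" using v_nat assms oi_iff by blast
    have "p ^ (2 * a) = p ^ Suc (2 * b)" using eq a b pow_sq by simp
    hence "2 * a = Suc (2 * b)" by (simp only: pp_eq)
    thus ?thesis by presburger
  qed
  thus ?thesis by simp
qed

definition "Nf x = fst x ^ 2 - \<Delta> * snd x ^ 2"
definition "Sm m = {x \<in> Oi \<times> Oi. v (Nf x - t ^ 2) \<le> p ^ m}"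

lemma vt2: "v (t ^ 2) = p ^ (2 * T)" using vt by (simp add: v_pow pow_sq)

lemma caseA: assumes "m \<le> 2 * T" shows "Sm m = cyl 0 ((m + 1) div 2) 0 (m div 2)"
proof -
  have t2: "v (t ^ 2) \<le> p ^ m" using vt2 assms by simp
  have key: "x \<in> Sm m \<longleftrightarrow> x \<in> cyl 0 ((m + 1) div 2) 0 (m div 2)" if x: "x \<in> Oi \<times> Oi" for x
  proof -
    have "v (Nf x - t ^ 2) \<le> p ^ m \<longleftrightarrow> v (Nf x) \<le> p ^ m"
    proof
      assume "v (Nf x - t ^ 2) \<le> p ^ m"
      hence "v ((Nf x - t ^ 2) + t ^ 2) \<le> p ^ m" using t2 by (intro v_le)
      thus "v (Nf x) \<le> p ^ m" by simp
    qed (use t2 v_le_diff in auto)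
    also have "\<dots> \<longleftrightarrow> v (fst x) ^ 2 \<le> p ^ m \<and> p * v (snd x) ^ 2 \<le> p ^ m"
      unfolding Nf_def using vN x by (auto simp: mem_Times_iff)
    also have "\<dots> \<longleftrightarrow> x \<in> cyl 0 ((m + 1) div 2) 0 (m div 2)"
      using sq_le psq_le x unfolding cyl_def ball1_def by (auto simp: mem_Times_iff)
    finally show ?thesis unfolding Sm_def using x by simp
  qed
  have "cyl 0 ((m + 1) div 2) 0 (m div 2) \<subseteq> Oi \<times> Oi"
    unfolding cyl_def using ball1_sub[OF zero_oi] by blast
  thus ?thesis using key unfolding Sm_def by blast
qed


lemma sub_gen: assumes m: "2 * T < m" and x: "x \<in> Sm m"
  shows "v (snd x) \<le> p ^ (T + min ((m - 2 * T) div 2) e)"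
    and "m - 2 * T \<le> 2 * e \<Longrightarrow> v (fst x - t) \<le> p ^ (T + (m - 2 * T + 1) div 2)"
proof -
  define j where "j = m - 2 * T"
  have mj: "m = 2 * T + j" using m unfolding j_def by simp
  obtain x1 x2 where xx: "x = (x1, x2)" by (cases x)
  have x1: "x1 \<in> Oi" and x2: "x2 \<in> Oi" and E0: "v (x1 ^ 2 - \<Delta> * x2 ^ 2 - t ^ 2) \<le> p ^ m"
    using x unfolding Sm_def Nf_def xx by auto
  define E0 where "E0 = x1 ^ 2 - \<Delta> * x2 ^ 2 - t ^ 2"
  have E0': "v E0 \<le> p ^ m" using E0 unfolding E0_def .
  have "p ^ m < p ^ (2 * T)" using m by simp
  hence lt: "v E0 < v (t ^ 2)" using E0' vt2 by linarith
  hence ne0: "v E0 \<noteq> v (t ^ 2)" by simp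
  have "v (x1 ^ 2 - \<Delta> * x2 ^ 2) = v (E0 + t ^ 2)" unfolding E0_def by simp
  also have "\<dots> = max (v E0) (v (t ^ 2))" by (rule v_add_eq[OF ne0])
  also have "\<dots> = p ^ (2 * T)" using lt vt2 by simp
  finally have hm0: "v (x1 ^ 2 - \<Delta> * x2 ^ 2) = p ^ (2 * T)" .
  have hm: "max (v x1 ^ 2) (p * v x2 ^ 2) = p ^ (2 * T)" using vN[OF x1 x2] hm0 by linarith
  have ne: "p * v x2 ^ 2 \<noteq> p ^ (2 * T)"
  proof (cases "x2 = 0")
    case True thus ?thesis using p_pow_pos[of "2*T"] p_pos by simp
  next
    case False
    then obtain b where b: "v x2 = p ^ b" using v_nat x2 oi_iff by blast
    have h: "p * v x2 ^ 2 = p ^ Suc (2 * b)" using b pow_sq[of b] by simp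
    show ?thesis
    proof
      assume "p * v x2 ^ 2 = p ^ (2 * T)"
      hence "p ^ Suc (2 * b) = p ^ (2 * T)" using h by simp
      hence "2 * T = Suc (2 * b)" by (simp only: pp_eq)
      thus False by presburger
    qed
  qed
  have vx1sq: "v x1 ^ 2 = p ^ (2 * T)" and vx2sq: "p * v x2 ^ 2 \<le> p ^ (2 * T)"
  proof -
    have maxl: "\<And>A B C::real. max A B = C \<Longrightarrow> B \<noteq> C \<Longrightarrow> A = C \<and> B \<le> C" by (auto simp: max_def)
    from maxl[OF hm ne] show "v x1 ^ 2 = p ^ (2 * T)" "p * v x2 ^ 2 \<le> p ^ (2 * T)" by auto
  qed
  have vx2: "v x2 \<le> p ^ T" using vx2sq psq_le[OF x2, of "2 * T"] by simp
  have "x1 \<noteq> 0" using vx1sq p_pow_pos[of "2 * T"] p_pos by auto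
  then obtain a where a: "v x1 = p ^ a" using v_nat x1 oi_iff by blast
  hence "a = T" using vx1sq pow_sq[of a] by simp
  hence vx1: "v x1 = p ^ T" using a by simp
  define y1 where "y1 = x1 / t"
  define y2 where "y2 = x2 / t"
  define z where "z = y1 - 1"
  define E where "E = E0 / t ^ 2"
  have vy1: "v y1 = 1" unfolding y1_def using vx1 vt p_pow_pos[of T] p_pos by (simp add: v_div)
  have vy2: "v y2 \<le> 1" unfolding y2_def using vx2 vt p_pow_pos[of T] p_pos by (simp add: v_div)
  have y2oi: "y2 \<in> Oi" using vy2 oi_iff by simp
  have zoi: "z \<in> Oi" unfolding z_def oi_iff using vy1 by (intro v_le_diff) auto
  have t2: "t ^ 2 \<noteq> 0" using t0 by simp
  have x1e: "x1 = t * y1" and x2e: "x2 = t * y2" unfolding y1_def y2_def using t0 by simp_all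
  have "E0 = t ^ 2 * (y1 ^ 2 - \<Delta> * y2 ^ 2 - 1)" unfolding E0_def x1e x2e by (simp add: algebra_simps power_mult_distrib)
  hence Ee: "E = y1 ^ 2 - \<Delta> * y2 ^ 2 - 1" unfolding E_def using t2 by simp
  have iden: "2 * z + z ^ 2 = \<Delta> * y2 ^ 2 + E"
    unfolding Ee z_def by (simp add: algebra_simps power2_eq_square)
  have vE: "v E \<le> p ^ j"
  proof -
    have "v E = v E0 / p ^ (2 * T)" unfolding E_def by (simp add: v_div vt2)
    also have "\<dots> \<le> p ^ m / p ^ (2 * T)" using E0 unfolding E0_def[symmetric]
      by (simp add: divide_right_mono p_pow_pos less_imp_le)
    also have "\<dots> = p ^ j" unfolding mj using p_pow_pos[of "2*T"] p_pos by (simp add: power_add)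
    finally show ?thesis .
  qed
  have x2eq: "x2 = t * y2" by (rule x2e)
  have claim1: "v y2 \<le> p ^ (min (j div 2) e)"
  proof (rule ccontr)
    assume c: "\<not> v y2 \<le> p ^ (min (j div 2) e)"
    hence "y2 \<noteq> 0" using p_pow_pos[of "min (j div 2) e"] by auto
    then obtain b where b: "v y2 = p ^ b" using v_nat y2oi oi_iff by blast
    hence bl: "b < min (j div 2) e" using c by (simp add: min_le_iff_disj not_le)
    define r where "r = Suc (2 * b)"
    have vr: "v (\<Delta> * y2 ^ 2) = p ^ r" unfolding r_def using b pow_sq[of b] by (simp add: vD2)
    have "r < j" unfolding r_def using bl by linarith
    hence "p ^ j < p ^ r" by simp
    hence "v E < v (\<Delta> * y2 ^ 2)" using vE vr by linarith
    hence lt2: "v E < v (\<Delta> * y2 ^ 2)" .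
    have "v (\<Delta> * y2 ^ 2 + E) = max (v (\<Delta> * y2 ^ 2)) (v E)" by (rule v_add_eq) (use lt2 in simp)
    also have "\<dots> = p ^ r" using lt2 vr by simp
    finally have veq: "v (2 * z + z ^ 2) = p ^ r" using iden by simp
    have o: "odd r" unfolding r_def by simp
    have r2: "r < 2 * e" unfolding r_def using bl by simp
    show False by (rule NS[OF zoi o r2 veq v2])
  qed
  have "v x2 = p ^ T * v y2" unfolding x2eq by (simp add: v_mult vt)
  also have "\<dots> \<le> p ^ T * p ^ (min (j div 2) e)" using claim1 p_pow_pos[of T] by simp
  finally show "v (snd x) \<le> p ^ (T + min ((m - 2 * T) div 2) e)" unfolding xx j_def by (simp add: power_add)
  assume j2: "m - 2 * T \<le> 2 * e"
  hence j2': "j \<le> 2 * e" unfolding j_def .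
  hence "j div 2 \<le> e" by presburger
  hence "min (j div 2) e = j div 2" by simp
  hence "v y2 \<le> p ^ (j div 2)" using claim1 by simp
  hence "p * v y2 ^ 2 \<le> p ^ j" using psq_le[OF y2oi, of j] by simp
  hence a1: "v (\<Delta> * y2 ^ 2) \<le> p ^ j" by (simp add: vD2)
  have "v (\<Delta> * y2 ^ 2 + E) \<le> p ^ j" by (rule v_le[OF a1 vE])
  hence "v (2 * z + z ^ 2) \<le> p ^ j" using iden by simp
  hence vz: "v z \<le> p ^ ((j + 1) div 2)" by (rule SQ1[OF zoi j2' _ v2])
  have "x1 - t = t * z" unfolding z_def x1e by (simp add: algebra_simps)
  hence "v (x1 - t) = p ^ T * v z" by (simp add: v_mult vt)
  also have "\<dots> \<le> p ^ T * p ^ ((j + 1) div 2)" using vz p_pow_pos[of T] by simp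
  finally show "v (fst x - t) \<le> p ^ (T + (m - 2 * T + 1) div 2)" unfolding xx j_def by (simp add: power_add)
qed


lemma pmono: "v x \<le> p ^ a \<Longrightarrow> m \<le> a \<Longrightarrow> v x \<le> p ^ m"
  using pp_le[of a m] by linarith

lemma caseB: assumes m1: "2 * T < m" and m2: "m \<le> 2 * T + 2 * e"
  shows "Sm m = cyl t (T + (m - 2 * T + 1) div 2) 0 (T + (m - 2 * T) div 2)"
proof (intro equalityI subsetI)
  fix x assume x: "x \<in> Sm m"
  have j: "m - 2 * T \<le> 2 * e" using m2 by simp
  hence "min ((m - 2 * T) div 2) e = (m - 2 * T) div 2" by presburger
  hence "v (snd x) \<le> p ^ (T + (m - 2 * T) div 2)" using sub_gen(1)[OF m1 x] by simp
  moreover have "v (fst x - t) \<le> p ^ (T + (m - 2 * T + 1) div 2)" using sub_gen(2)[OF m1 x j] .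
  ultimately show "x \<in> cyl t (T + (m - 2 * T + 1) div 2) 0 (T + (m - 2 * T) div 2)"
    unfolding cyl_def ball1_def by (auto simp: mem_Times_iff)
next
  fix x assume x: "x \<in> cyl t (T + (m - 2 * T + 1) div 2) 0 (T + (m - 2 * T) div 2)"
  define j where "j = m - 2 * T"
  have mj: "m = 2 * T + j" and j2: "j \<le> 2 * e" using m1 m2 unfolding j_def by auto
  define d where "d = fst x - t"
  define x2 where "x2 = snd x"
  have vd: "v d \<le> p ^ (T + (j + 1) div 2)" and vx2: "v x2 \<le> p ^ (T + j div 2)"
    using x unfolding cyl_def ball1_def d_def x2_def j_def by (auto simp: mem_Times_iff)
  have xoi: "x \<in> Oi \<times> Oi" using x ball1_sub[OF t_oi] ball1_sub[OF zero_oi] unfolding cyl_def by blast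
  hence x2oi: "x2 \<in> Oi" unfolding x2_def by (auto simp: mem_Times_iff)
  have iden: "Nf x - t ^ 2 = 2 * (t * d) + d ^ 2 - \<Delta> * x2 ^ 2"
    unfolding Nf_def d_def x2_def by (simp add: algebra_simps power2_eq_square)
  have a1: "v (2 * (t * d)) \<le> p ^ m"
  proof -
    have "v (2 * (t * d)) \<le> p ^ (e + (T + (T + (j + 1) div 2)))"
      using vprod_le[of 2 e "t * d" "T + (T + (j + 1) div 2)"] vprod_le[of t T d "T + (j + 1) div 2"] v2 vt vd by simp
    moreover have "m \<le> e + (T + (T + (j + 1) div 2))" unfolding mj using j2 by presburger
    ultimately show ?thesis by (rule pmono)
  qed
  have a2: "v (d ^ 2) \<le> p ^ m"
  proof -
    have "v (d ^ 2) \<le> p ^ (2 * (T + (j + 1) div 2))" using vsq_le[OF vd] .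
    moreover have "m \<le> 2 * (T + (j + 1) div 2)" unfolding mj by presburger
    ultimately show ?thesis by (rule pmono)
  qed
  have a3: "v (\<Delta> * x2 ^ 2) \<le> p ^ m"
  proof -
    have "m div 2 = T + j div 2" unfolding mj by presburger
    hence "p * v x2 ^ 2 \<le> p ^ m" using psq_le[OF x2oi, of m] vx2 by simp
    thus ?thesis by (simp add: vD2)
  qed
  have "v (2 * (t * d) + d ^ 2 - \<Delta> * x2 ^ 2) \<le> p ^ m"
    by (rule v_le_diff[OF v_le[OF a1 a2] a3])
  thus "x \<in> Sm m" unfolding Sm_def using xoi iden by simp
qed


lemma hensel: assumes b: "v b \<le> p ^ (T + e)"
  shows "\<exists>s. v (s - t) \<le> p ^ (T + e + 1) \<and> v (s ^ 2 - t ^ 2 - \<Delta> * b ^ 2) \<le> p ^ (Suc (2 * (T + e)) + d)"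
proof (induction d)
  case 0
  have "v (b ^ 2) \<le> p ^ (2 * (T + e))" by (rule vsq_le[OF b])
  hence "p * v (b ^ 2) \<le> p * p ^ (2 * (T + e))" using p_pos by simp
  hence "v (\<Delta> * b ^ 2) \<le> p ^ (Suc (2 * (T + e)))" by (simp add: vD2 v_pow)
  hence "v (t ^ 2 - t ^ 2 - \<Delta> * b ^ 2) \<le> p ^ (Suc (2 * (T + e)) + 0)" by simp
  moreover have "v (t - t) \<le> p ^ (T + e + 1)" using p_pow_pos[of "T + e + 1"] by simp
  ultimately show ?case by blast
next
  case (Suc d)
  define K where "K = Suc (2 * (T + e)) + d"
  obtain s where s1: "v (s - t) \<le> p ^ (T + e + 1)" and s2: "v (s ^ 2 - t ^ 2 - \<Delta> * b ^ 2) \<le> p ^ K"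
    using Suc unfolding K_def by blast
  define r where "r = s ^ 2 - t ^ 2 - \<Delta> * b ^ 2"
  have "p ^ (T + e + 1) < p ^ T" by (subst pp_lt) simp
  hence lt: "v (s - t) < v t" using s1 vt by linarith
  have "v s = v ((s - t) + t)" by simp
  also have "\<dots> = max (v (s - t)) (v t)" by (rule v_add_eq) (use lt in simp)
  also have "\<dots> = p ^ T" using lt vt by simp
  finally have vs: "v s = p ^ T" .
  have s0: "s \<noteq> 0" using vs p_pow_pos[of T] p_pos by auto
  have two0: "(2::'a) \<noteq> 0" using v2 p_pow_pos[of e] p_pos by auto
  have v2s: "v (2 * s) = p ^ (e + T)" using v2 vs by (simp add: v_mult power_add)
  define dl where "dl = - r / (2 * s)"
  have vdl: "v dl \<le> p ^ (K - e - T)"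
  proof -
    have "v dl = v r / p ^ (e + T)" unfolding dl_def by (simp add: v_div v2s)
    also have "\<dots> \<le> p ^ K / p ^ (e + T)" using s2 unfolding r_def[symmetric]
      by (simp add: divide_right_mono p_pow_pos less_imp_le)
    also have "p ^ K = p ^ (K - e - T) * p ^ (e + T)" unfolding K_def by (simp add: power_add[symmetric])
    finally show ?thesis using p_pow_pos[of "e + T"] p_pos by simp
  qed
  have idn: "(s + dl) ^ 2 - t ^ 2 - \<Delta> * b ^ 2 = dl ^ 2"
  proof -
    have "2 * s * dl = - r" unfolding dl_def using s0 two0 by simp
    thus ?thesis unfolding r_def by (simp add: algebra_simps power2_eq_square)
  qed
  have "v (dl ^ 2) \<le> p ^ (2 * (K - e - T))" by (rule vsq_le[OF vdl])
  moreover have "Suc (2 * (T + e)) + Suc d \<le> 2 * (K - e - T)" unfolding K_def by simp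
  ultimately have c2: "v ((s + dl) ^ 2 - t ^ 2 - \<Delta> * b ^ 2) \<le> p ^ (Suc (2 * (T + e)) + Suc d)"
    unfolding idn by (rule pmono)
  have "v dl \<le> p ^ (T + e + 1)" using vdl by (rule pmono) (simp add: K_def)
  hence "v ((s - t) + dl) \<le> p ^ (T + e + 1)" using s1 by (intro v_le)
  hence c1: "v ((s + dl) - t) \<le> p ^ (T + e + 1)" by (simp add: algebra_simps)
  show ?case using c1 c2 by blast
qed

lemma Zlem: assumes w: "v w = p ^ c" and c: "c + 1 \<le> n"
  shows "v (z * (z + w)) \<le> p ^ (n + c) \<longleftrightarrow> v z \<le> p ^ n \<or> v (z + w) \<le> p ^ n"
proof
  have pnc: "p ^ n \<le> p ^ c" using c by simp
  have pn: "p ^ (n + c) = p ^ n * p ^ c" by (simp add: power_add)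
  assume h: "v (z * (z + w)) \<le> p ^ (n + c)"
  hence h': "v z * v (z + w) \<le> p ^ n * p ^ c" by (simp add: v_mult pn)
  consider "v z > p ^ c" | "v z < p ^ c" | "v z = p ^ c" by linarith
  thus "v z \<le> p ^ n \<or> v (z + w) \<le> p ^ n"
  proof cases
    case 1
    hence "v (z + w) = v z" using v_add_eq[of z w] w by simp
    hence "v z * v z \<le> p ^ n * p ^ c" using h' by simp
    moreover have "p ^ c * p ^ c < v z * v z" using 1 p_pow_pos[of c] by (simp add: mult_strict_mono)
    moreover have "p ^ n * p ^ c \<le> p ^ c * p ^ c" using pnc p_pow_pos[of c] by simp
    ultimately show ?thesis by linarith
  next
    case 2
    hence "v (z + w) = p ^ c" using v_add_eq[of z w] w by simp
    hence "v z * p ^ c \<le> p ^ n * p ^ c" using h' by simp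
    thus ?thesis using p_pow_pos[of c] by simp
  next
    case 3
    hence "p ^ c * v (z + w) \<le> p ^ c * p ^ n" using h' by (simp add: mult.commute)
    thus ?thesis using p_pow_pos[of c] by simp
  qed
next
  have pnc: "p ^ n \<le> p ^ c" using c by simp
  have pn: "p ^ (n + c) = p ^ n * p ^ c" by (simp add: power_add)
  assume "v z \<le> p ^ n \<or> v (z + w) \<le> p ^ n"
  thus "v (z * (z + w)) \<le> p ^ (n + c)"
  proof
    assume a: "v z \<le> p ^ n"
    have "v z \<le> p ^ c" using a pnc by linarith
    hence "v (z + w) \<le> p ^ c" using w by (intro v_le) auto
    thus ?thesis using a by (simp add: v_mult pn mult_mono v_nonneg p_pow_pos less_imp_le)
  next
    assume a: "v (z + w) \<le> p ^ n"
    have "v (z + w) \<le> p ^ c" using a pnc by linarith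
    hence "v ((z + w) - w) \<le> p ^ c" using w by (intro v_le_diff) auto
    hence "v z \<le> p ^ c" by simp
    thus ?thesis using a by (simp add: v_mult pn mult_mono v_nonneg p_pow_pos less_imp_le mult.commute)
  qed
qed


lemma vs_lem: assumes s1: "v (s - t) \<le> p ^ (T + e + 1)" shows "v s = p ^ T"
proof -
  have "p ^ (T + e + 1) < p ^ T" by (subst pp_lt) simp
  hence lt: "v (s - t) < v t" using s1 vt by linarith
  have "v s = v ((s - t) + t)" by simp
  also have "\<dots> = max (v (s - t)) (v t)" by (rule v_add_eq) (use lt in simp)
  also have "\<dots> = p ^ T" using lt vt by simp
  finally show ?thesis .
qed

lemma fiber: assumes m: "Suc (2 * (T + e)) \<le> m" and b: "v b \<le> p ^ (T + e)"
  and s1: "v (s - t) \<le> p ^ (T + e + 1)" and s2: "v (s ^ 2 - t ^ 2 - \<Delta> * b ^ 2) \<le> p ^ m"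
  shows "Sm m \<inter> (UNIV \<times> ball1 b (m - T)) = cyl s (m - T - e) b (m - T) \<union> cyl (- s) (m - T - e) b (m - T)"
    and "cyl s (m - T - e) b (m - T) \<inter> cyl (- s) (m - T - e) b (m - T) = {}"
    and "s \<in> Oi" "- s \<in> Oi" "b \<in> Oi"
proof -
  define n where "n = m - T - e"
  define k where "k = m - T"
  define c where "c = T + e"
  have nc: "n + c = m" "c + 1 \<le> n" "c \<le> k" "k + c = m + e" unfolding n_def c_def k_def using m by auto
  have vs: "v s = p ^ T" by (rule vs_lem[OF s1])
  show soi: "s \<in> Oi" using vs p_pow_le1 oi_iff by simp
  thus msoi: "- s \<in> Oi" using oi_iff by simp
  show boi: "b \<in> Oi" using b p_pow_le1[of "T + e"] oi_iff by simp
  have v2s: "v (2 * s) = p ^ c" using v2 vs unfolding c_def by (simp add: v_mult power_add mult.commute)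
  have key: "x \<in> Sm m \<longleftrightarrow> x \<in> cyl s n b k \<union> cyl (- s) n b k" if xb: "snd x \<in> ball1 b k" for x
  proof -
    obtain x1 x2 where xx: "x = (x1, x2)" by (cases x)
    have x2b: "v (x2 - b) \<le> p ^ k" using xb unfolding xx ball1_def by simp
    have x2oi: "x2 \<in> Oi" using xb ball1_sub[OF boi] unfolding xx by auto
    have a1: "v (x2 + b) \<le> p ^ c"
    proof -
      have "v (x2 - b) \<le> p ^ c" using x2b nc(3) by (rule pmono)
      moreover have "v (2 * b) \<le> p ^ c"
      proof -
        have "v (2 * b) \<le> p ^ (e + (T + e))" using vprod_le[of 2 e b "T + e"] v2 b by simp
        thus ?thesis unfolding c_def by (rule pmono) simp
      qed
      ultimately have "v ((x2 - b) + 2 * b) \<le> p ^ c" by (rule v_le)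
      thus ?thesis by (simp add: algebra_simps)
    qed
    have vD': "v (\<Delta> * (x2 ^ 2 - b ^ 2)) \<le> p ^ m"
    proof -
      have "x2 ^ 2 - b ^ 2 = (x2 - b) * (x2 + b)" by (simp add: algebra_simps power2_eq_square)
      hence "v (x2 ^ 2 - b ^ 2) \<le> p ^ (k + c)" using vprod_le[OF x2b a1] by simp
      hence "v (\<Delta> * (x2 ^ 2 - b ^ 2)) \<le> p ^ (1 + (k + c))" using vprod_le[of \<Delta> 1 _ "k + c"] vD by simp
      thus ?thesis by (rule pmono) (use nc in simp)
    qed
    define R where "R = (s ^ 2 - t ^ 2 - \<Delta> * b ^ 2) - \<Delta> * (x2 ^ 2 - b ^ 2)"
    have vR: "v R \<le> p ^ m" unfolding R_def by (rule v_le_diff[OF s2 vD'])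
    define z where "z = x1 - s"
    have iden: "Nf x - t ^ 2 = z * (z + 2 * s) + R"
      unfolding Nf_def xx z_def R_def by (simp add: algebra_simps power2_eq_square)
    have "v (Nf x - t ^ 2) \<le> p ^ m \<longleftrightarrow> v (z * (z + 2 * s)) \<le> p ^ m"
    proof
      assume "v (Nf x - t ^ 2) \<le> p ^ m"
      hence "v ((Nf x - t ^ 2) - R) \<le> p ^ m" using vR by (rule v_le_diff)
      thus "v (z * (z + 2 * s)) \<le> p ^ m" unfolding iden by simp
    next
      assume "v (z * (z + 2 * s)) \<le> p ^ m"
      thus "v (Nf x - t ^ 2) \<le> p ^ m" unfolding iden using vR by (rule v_le)
    qed
    also have "\<dots> \<longleftrightarrow> v z \<le> p ^ n \<or> v (z + 2 * s) \<le> p ^ n"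
      using Zlem[OF v2s nc(2), of z] nc(1) by simp
    also have "\<dots> \<longleftrightarrow> x1 \<in> ball1 s n \<or> x1 \<in> ball1 (- s) n"
      unfolding ball1_def z_def by (simp add: algebra_simps)
    finally have eqv: "v (Nf x - t ^ 2) \<le> p ^ m \<longleftrightarrow> x1 \<in> ball1 s n \<or> x1 \<in> ball1 (- s) n" .
    have "x1 \<in> ball1 s n \<or> x1 \<in> ball1 (- s) n \<Longrightarrow> x1 \<in> Oi"
      using ball1_sub[OF soi] ball1_sub[OF msoi] by blast
    thus ?thesis using eqv x2oi xb unfolding Sm_def cyl_def xx by auto
  qed
  show "Sm m \<inter> (UNIV \<times> ball1 b (m - T)) = cyl s (m - T - e) b (m - T) \<union> cyl (- s) (m - T - e) b (m - T)"
  proof -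
    have e1: "m - T = k" "k - e = n" unfolding k_def n_def by simp_all
    show ?thesis using key unfolding e1 cyl_def by (auto simp: mem_Times_iff)
  qed
  show "cyl s (m - T - e) b (m - T) \<inter> cyl (- s) (m - T - e) b (m - T) = {}"
  proof (rule ccontr)
    assume "cyl s (m - T - e) b (m - T) \<inter> cyl (- s) (m - T - e) b (m - T) \<noteq> {}"
    then obtain x where "v (fst x - s) \<le> p ^ n" "v (fst x + s) \<le> p ^ n"
      unfolding cyl_def ball1_def n_def by auto
    hence "v ((fst x + s) - (fst x - s)) \<le> p ^ n" by (rule v_le_diff[rotated])
    hence "v (2 * s) \<le> p ^ n" by (simp add: algebra_simps)
    moreover have "p ^ n < p ^ c" using nc by simp
    ultimately show False using v2s by simp
  qed
qed


lemma caseC_ind: assumes m: "Suc (2 * (T + e)) \<le> m"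
  shows "d \<le> m - 2 * T - e \<Longrightarrow> v b \<le> p ^ (T + e) \<Longrightarrow>
    Sm m \<inter> (UNIV \<times> ball1 b (m - T - d)) \<in> sets \<mu> \<and>
    measure \<mu> (Sm m \<inter> (UNIV \<times> ball1 b (m - T - d))) = 2 * p ^ ((m - T - e) + (m - T - d))"
proof (induction d arbitrary: b)
  case 0
  obtain s where s1: "v (s - t) \<le> p ^ (T + e + 1)"
      and s2': "v (s ^ 2 - t ^ 2 - \<Delta> * b ^ 2) \<le> p ^ (Suc (2 * (T + e)) + (m - Suc (2 * (T + e))))"
    using hensel[OF "0.prems"(2)] by blast
  have "Suc (2 * (T + e)) + (m - Suc (2 * (T + e))) = m" using m by simp
  hence s2: "v (s ^ 2 - t ^ 2 - \<Delta> * b ^ 2) \<le> p ^ m" using s2' by metis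
  note F = fiber[OF m "0.prems"(2) s1 s2]
  interpret prob_space \<mu> by (rule ps)
  have A: "cyl s (m - T - e) b (m - T) \<in> sets \<mu>" "cyl (- s) (m - T - e) b (m - T) \<in> sets \<mu>"
    using cyl_meas(1) F(3-5) by auto
  have "measure \<mu> (cyl s (m - T - e) b (m - T) \<union> cyl (- s) (m - T - e) b (m - T))
      = measure \<mu> (cyl s (m - T - e) b (m - T)) + measure \<mu> (cyl (- s) (m - T - e) b (m - T))"
    by (rule finite_measure_Union[OF A F(2)])
  also have "\<dots> = 2 * p ^ ((m - T - e) + (m - T))" using cyl_meas(2) F(3-5) by simp
  finally have "measure \<mu> (cyl s (m - T - e) b (m - T) \<union> cyl (- s) (m - T - e) b (m - T)) = 2 * p ^ ((m - T - e) + (m - T))" .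
  thus ?case using A by (simp add: F(1))
next
  case (Suc d)
  define i where "i = m - T - Suc d"
  have si: "Suc i = m - T - d" and iTe: "T + e \<le> i" using Suc.prems(1) unfolding i_def by auto
  have boi: "b \<in> Oi" using Suc.prems(2) p_pow_le1[of "T + e"] oi_iff by simp
  define B where "B = (\<lambda>r. b + \<pi> ^ i * r)"
  have vB: "v (B r) \<le> p ^ (T + e)" if r: "r \<in> R1" for r
  proof -
    have "v r \<le> p ^ 0" using r R1(3) oi_iff by auto
    hence "v (\<pi> ^ i * r) \<le> p ^ (i + 0)" using vprod_le[of "\<pi> ^ i" i r 0] by (simp add: v_pow)
    hence "v (\<pi> ^ i * r) \<le> p ^ (T + e)" by (rule pmono) (use iTe in simp)
    thus ?thesis unfolding B_def using Suc.prems(2) by (intro v_le)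
  qed
  define A where "A = (\<lambda>r. Sm m \<inter> (UNIV \<times> ball1 (B r) (Suc i)))"
  have IH: "A r \<in> sets \<mu> \<and> measure \<mu> (A r) = 2 * p ^ ((m - T - e) + Suc i)" if "r \<in> R1" for r
    using Suc.IH[of "B r"] Suc.prems(1) vB[OF that] unfolding A_def si by simp
  have dec: "Sm m \<inter> (UNIV \<times> ball1 b i) = (\<Union>r\<in>R1. A r)"
    unfolding A_def B_def ball1_decomp(1)[OF boi, of i] by auto
  have disj: "disjoint_family_on A R1"
    unfolding disjoint_family_on_def A_def B_def using disj_ball[OF boi] by blast
  have U1: "(\<Union>r\<in>R1. A r) \<in> sets \<mu> \<and> measure \<mu> (\<Union>r\<in>R1. A r) = real (card R1) * (2 * p ^ ((m - T - e) + Suc i))"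
    using U[of R1 A] R1(1) disj IH by auto
  have "real (card R1) * (2 * p ^ ((m - T - e) + Suc i)) = 2 * p ^ ((m - T - e) + i)"
    using R1(2) pq by (simp add: algebra_simps)
  thus ?case using U1 dec unfolding i_def by simp
qed

lemma caseC: assumes m: "Suc (2 * (T + e)) \<le> m"
  shows "Sm m \<in> sets \<mu>" "measure \<mu> (Sm m) = 2 * p ^ m"
proof -
  have sub: "Sm m \<subseteq> UNIV \<times> ball1 0 (T + e)"
  proof
    fix x assume x: "x \<in> Sm m"
    have m1: "2 * T < m" using m by simp
    have "min ((m - 2 * T) div 2) e = e" using m by presburger
    hence "v (snd x) \<le> p ^ (T + e)" using sub_gen(1)[OF m1 x] by simp
    thus "x \<in> UNIV \<times> ball1 0 (T + e)" unfolding ball1_def by (auto simp: mem_Times_iff)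
  qed
  have e1: "m - T - (m - 2 * T - e) = T + e" using m by simp
  have "Sm m \<inter> (UNIV \<times> ball1 0 (T + e)) = Sm m" using sub by blast
  moreover have "Sm m \<inter> (UNIV \<times> ball1 0 (m - T - (m - 2 * T - e))) \<in> sets \<mu> \<and>
    measure \<mu> (Sm m \<inter> (UNIV \<times> ball1 0 (m - T - (m - 2 * T - e)))) = 2 * p ^ ((m - T - e) + (m - T - (m - 2 * T - e)))"
    by (rule caseC_ind[OF m]) (use p_pow_pos[of "T + e"] in auto)
  moreover have "(m - T - e) + (T + e) = m" using m by simp
  ultimately show "Sm m \<in> sets \<mu>" "measure \<mu> (Sm m) = 2 * p ^ m" unfolding e1 by simp_all
qed


lemma Sm_meas: "measure \<mu> (Sm m) = p ^ m * (if m \<le> 2 * T + 2 * e then 1 else 2)"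
proof (cases "m \<le> 2 * T")
  case True
  have "measure \<mu> (Sm m) = p ^ ((m + 1) div 2 + m div 2)"
    unfolding caseA[OF True] by (rule cyl_meas(2)[OF zero_oi zero_oi])
  moreover have "(m + 1) div 2 + m div 2 = m" by presburger
  ultimately show ?thesis using True by simp
next
  case False
  show ?thesis
  proof (cases "m \<le> 2 * T + 2 * e")
    case True
    have m1: "2 * T < m" using False by simp
    have "measure \<mu> (Sm m) = p ^ ((T + (m - 2 * T + 1) div 2) + (T + (m - 2 * T) div 2))"
      unfolding caseB[OF m1 True] by (rule cyl_meas(2)[OF t_oi zero_oi])
    moreover have "(T + (m - 2 * T + 1) div 2) + (T + (m - 2 * T) div 2) = m" using m1 by presburger
    ultimately show ?thesis using True by simp
  next
    case c: False
    hence "Suc (2 * (T + e)) \<le> m" by simp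
    thus ?thesis using caseC(2) c by simp
  qed
qed

lemma two_ne0: "(2::'a) \<noteq> 0"
proof
  assume "(2::'a) = 0"
  hence "v 2 = 0" by simp
  thus False using v2 p_pow_pos[of e] by linarith
qed
lemma pi_ne0: "\<pi> \<noteq> 0"
proof
  assume "\<pi> = 0"
  hence "p = 0" by simp
  thus False using p_pos by simp
qed

lemma Xl_val: "X_l v \<pi> \<mu> (\<lambda>(x1, x2). x1\<^sup>2 - \<Delta> * x2\<^sup>2) (t\<^sup>2) l = p ^ (l + e) * (if l \<le> 2 * T + e then 1 else 2)"
proof -
  have vc: "v (2 * \<pi> ^ l) = p ^ (l + e)" using v2 by (simp add: v_mult v_pow power_add mult.commute)
  have c0: "2 * \<pi> ^ l \<noteq> 0" using two_ne0 pi_ne0 by simp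
  have eqv: "(\<exists>y\<in>Oi. N = 2 * \<pi> ^ l * y) \<longleftrightarrow> v N \<le> p ^ (l + e)" for N
  proof
    assume "\<exists>y\<in>Oi. N = 2 * \<pi> ^ l * y"
    then obtain y where y: "y \<in> Oi" "N = 2 * \<pi> ^ l * y" by blast
    have "v N = p ^ (l + e) * v y" using y(2) vc by (simp add: v_mult)
    also have "\<dots> \<le> p ^ (l + e) * 1" using y(1) oi_iff p_pow_pos[of "l + e"] by (intro mult_left_mono) auto
    finally show "v N \<le> p ^ (l + e)" by simp
  next
    assume a: "v N \<le> p ^ (l + e)"
    define y where "y = N / (2 * \<pi> ^ l)"
    have "v y = v N / p ^ (l + e)" unfolding y_def by (simp add: v_div vc)
    hence "v y \<le> 1" using a p_pow_pos[of "l + e"] by simp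
    moreover have "N = 2 * \<pi> ^ l * y" unfolding y_def using c0 by simp
    ultimately show "\<exists>y\<in>Oi. N = 2 * \<pi> ^ l * y" using oi_iff by blast
  qed
  have "{x \<in> Oi \<times> Oi. \<exists>y\<in>Oi. (\<lambda>(x1, x2). x1\<^sup>2 - \<Delta> * x2\<^sup>2) x - t\<^sup>2 = 2 * \<pi> ^ l * y} = Sm (l + e)"
  proof -
    have h: "(\<lambda>(x1, x2). x1\<^sup>2 - \<Delta> * x2\<^sup>2) x = Nf x" for x :: "'a \<times> 'a"
      unfolding Nf_def by (simp add: case_prod_beta)
    show ?thesis unfolding Sm_def by (simp only: h eqv)
  qed
  hence "X_l v \<pi> \<mu> (\<lambda>(x1, x2). x1\<^sup>2 - \<Delta> * x2\<^sup>2) (t\<^sup>2) l = measure \<mu> (Sm (l + e))"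
    unfolding X_l_def by simp
  also have "\<dots> = p ^ (l + e) * (if l \<le> 2 * T + e then 1 else 2)" unfolding Sm_meas by simp
  finally show ?thesis .
qed


lemma series: assumes b: "0 < Re \<beta>"
  shows "X_gen v \<pi> \<mu> (\<lambda>(x1, x2). x1\<^sup>2 - \<Delta> * x2\<^sup>2) \<beta> (t\<^sup>2)
     = of_real (v 2) * (1 + ((of_real (real (residue_card v)) powr (- \<beta>)) / of_real (real (residue_card v))) ^ (2 * T + e + 1))
        / (1 - (of_real (real (residue_card v)) powr (- \<beta>)) / of_real (real (residue_card v)))"
proof -
  define q where "q = real (residue_card v)"
  define z :: complex where "z = of_real q powr (- \<beta>)"
  define w where "w = z / of_real q"
  define N where "N = 2 * T + e + 1"
  define c :: complex where "c = of_real (v 2)"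
  have q1: "q > 1" unfolding q_def by (rule q_gt1)
  have pq': "p = 1 / q" unfolding q_def by (rule p_q)
  have nz: "norm z = q powr (- Re \<beta>)" unfolding z_def
    using norm_powr_real_powr[of "of_real q" "- \<beta>"] q1 by simp
  have "q powr (- Re \<beta>) < 1" using q1 b by (intro powr_less_one) auto
  hence nz1: "norm z < 1" using nz by simp
  have nw: "norm w < 1"
  proof -
    have "norm w = norm z / q" unfolding w_def using q1 by (simp add: norm_divide)
    also have "\<dots> \<le> norm z" using q1 mult_left_mono[of 1 q "norm z"] by (simp add: divide_le_eq)
    finally show ?thesis using nz1 by linarith
  qed
  have trm: "z ^ l * of_real (X_l v \<pi> \<mu> (\<lambda>(x1, x2). x1\<^sup>2 - \<Delta> * x2\<^sup>2) (t\<^sup>2) l)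
       = c * w ^ l + (if N \<le> l then c * w ^ l else 0)" for l
  proof -
    have "of_real (X_l v \<pi> \<mu> (\<lambda>(x1, x2). x1\<^sup>2 - \<Delta> * x2\<^sup>2) (t\<^sup>2) l) =
       (of_real (p ^ e) * (of_real p) ^ l * (if l \<le> 2 * T + e then 1 else 2) :: complex)"
      unfolding Xl_val by (simp add: power_add mult.commute)
    also have "(of_real p :: complex) = 1 / of_real q" unfolding pq' by simp
    finally have "z ^ l * of_real (X_l v \<pi> \<mu> (\<lambda>(x1, x2). x1\<^sup>2 - \<Delta> * x2\<^sup>2) (t\<^sup>2) l)
        = c * (z ^ l * (1 / of_real q) ^ l) * (if l \<le> 2 * T + e then 1 else 2)"
      unfolding c_def v2 by (simp add: mult_ac)
    also have "z ^ l * (1 / of_real q) ^ l = w ^ l" unfolding w_def by (simp add: power_divide)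
    finally show ?thesis unfolding N_def by auto
  qed
  have g1: "(\<lambda>l. c * w ^ l) sums (c * (1 / (1 - w)))"
    by (rule sums_mult[OF geometric_sums[OF nw]])
  have g2: "(\<lambda>l. if N \<le> l then c * w ^ l else 0) sums (c * w ^ N * (1 / (1 - w)))"
  proof -
    have "(\<lambda>i. (\<lambda>l. if N \<le> l then c * w ^ l else 0) (i + N)) = (\<lambda>i. c * w ^ N * w ^ i)"
      by (simp add: power_add mult_ac)
    moreover have "(\<lambda>i. c * w ^ N * w ^ i) sums (c * w ^ N * (1 / (1 - w)))"
      by (rule sums_mult[OF geometric_sums[OF nw]])
    ultimately have "(\<lambda>i. (\<lambda>l. if N \<le> l then c * w ^ l else 0) (i + N)) sums (c * w ^ N * (1 / (1 - w)))" by simp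
    hence "(\<lambda>l. if N \<le> l then c * w ^ l else 0) sums (c * w ^ N * (1 / (1 - w)) + (\<Sum>i<N. if N \<le> i then c * w ^ i else 0))"
      by (subst (asm) sums_iff_shift)
    thus ?thesis by simp
  qed
  have "(\<lambda>l. z ^ l * of_real (X_l v \<pi> \<mu> (\<lambda>(x1, x2). x1\<^sup>2 - \<Delta> * x2\<^sup>2) (t\<^sup>2) l)) sums
      (c * (1 / (1 - w)) + c * w ^ N * (1 / (1 - w)))"
    unfolding trm by (rule sums_add[OF g1 g2])
  hence "X_gen v \<pi> \<mu> (\<lambda>(x1, x2). x1\<^sup>2 - \<Delta> * x2\<^sup>2) \<beta> (t\<^sup>2) = c * (1 / (1 - w)) + c * w ^ N * (1 / (1 - w))"
    unfolding X_gen_def z_def q_def by (simp add: sums_iff)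
  also have "\<dots> = c * (1 + w ^ N) / (1 - w)" by (simp add: distrib_left add_divide_distrib)
  finally show ?thesis unfolding c_def w_def z_def q_def N_def .
qed

end

theorem proposition6p1:
  fixes v :: "'a::field \<Rightarrow> real" and \<pi> \<Delta> t :: 'a
    and \<mu> :: "('a \<times> 'a) measure" and \<beta> :: complex and T e :: nat
  assumes "nonarch_local_field v \<pi>"
    and "v 2 < 1"
    and "haar_o2 v \<pi> \<mu>"
    and "v 2 = real (residue_card v) powr (- real e)"
    and "v \<Delta> = v \<pi>"
    and "t \<in> int_ring v" and "t \<noteq> 0"
    and "v t = real (residue_card v) powr (- real T)"
    and "0 < Re \<beta>"
  shows "let q = real (residue_card v);
             z = of_real q powr (- \<beta>);
             w = z / of_real q
         in X_gen v \<pi> \<mu> (\<lambda>(x1, x2). x1\<^sup>2 - \<Delta> * x2\<^sup>2) \<beta> (t\<^sup>2)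
            = of_real (v 2) * (1 + w ^ (2 * T + e + 1)) / (1 - w)"
proof -
  interpret LF v \<pi> by unfold_locales (rule assms(1))
  have q0: "real (residue_card v) > 0" using q_gt1 by simp
  have pw: "real (residue_card v) powr (- real n) = p ^ n" for n
    using q0 p_q by (simp add: powr_minus_divide powr_realpow power_one_over)
  interpret LFP v \<pi> \<mu> \<Delta> t e T
  proof unfold_locales
    show "haar_o2 v \<pi> \<mu>" by (rule assms(3))
    show "v 2 = p ^ e" using assms(4) pw by simp
    show "v \<Delta> = p" by (rule assms(5))
    show "v t = p ^ T" using assms(8) pw by simp
    show "t \<noteq> 0" by (rule assms(7))
  qed
  show ?thesis unfolding Let_def by (rule series[OF assms(9)])
qed

end
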